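(* Let $\vec\Sigma$ be a finite sequence of finite connected tight labeled core graphs over $\mathcal B$ and let $\alpha$ be an elementary Whitehead automorphism with distinguished label $b$. Let $e$ be an edge of $\vec\Sigma$ with label $c\notin\{b,b^{-1}\}$ and let $e'$ be the image in $\mathrm{tight}(\alpha\vec\Sigma)$ of the unique subedge of $\alpha(e)$ labeled $c$. Then $e'$ lies in $\alpha_\#\vec\Sigma=\mathrm{core}(\mathrm{tight}(\alpha\vec\Sigma))$. Consequently $e\mapsto e'$ is a bijection between the edges of $\vec\Sigma$ not labeled $b^{\pm1}$ and the edges of $\alpha_\#\vec\Sigma$ not labeled $b^{\pm1}$.
   Context: $F(\mathcal B)$ is the free group on the finite set $\mathcal B$. A labeled graph assigns labels in $\mathcal B^{\pm1}$ to oriented edges, $e^{-1}$ carrying the inverse label; it is tight if distinct oriented edges with the same initial vertex have distinct labels. The core of a graph is the union of all edges crossed by immersed loops (cyclically reduced closed edge paths); a core graph equals its core. $\mathrm{tight}(\Sigma)$ is the result of iteratively folding (identifying two distinct oriented edges with common initial vertex and equal labels) until tight, with quotient map $\Sigma\to\mathrm{tight}(\Sigma)$. For $\alpha\in\mathrm{Aut}(F(\mathcal B))$, $\alpha\Sigma$ replaces each oriented edge labeled $c$ by a path spelling the reduced word $\alpha(c)$. Operations on sequences are componentwise. An elementary Whitehead automorphism is either induced by a permutation $\pi$ of $\mathcal B^{\pm1}$ with $\pi(c^{-1})=\pi(c)^{-1}$, or is determined by $b\in\mathcal B^{\pm1}$ (the distinguished label) and $A\subset\mathcal B^{\pm1}\setminus\{b^{\pm1}\}$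 via $\alpha(b)=b$, $\alpha(c)=b^{\epsilon(c)}\,c\,b^{-\epsilon(c^{-1})}$ for $c\neq b^{\pm1}$, where $\epsilon(x)=1$ if $x\in A$ and $0$ otherwise. *)

theory Defs
  imports Main
begin

text \<open>The alphabet B is a (finite) type 'b. A signed label (c, True) stands for c,
  (c, False) for c^{-1}.\<close>

type_synonym 'b slabel = "'b \<times> bool"

definition linv :: "'b slabel \<Rightarrow> 'b slabel" where
  "linv x = (fst x, \<not> snd x)"

text \<open>Each (unoriented) edge carries a label for a fixed reference orientation;
  the oriented edge (e, True) runs from src e to tgt e and is labeled lab e,
  the oriented edge (e, False) = e^{-1} runs backwards with label linv (lab e).\<close>

record ('v, 'e, 'b) lgraph =
  verts :: "'v set"
  edges :: "'e set"
  src :: "'e \<Rightarrow> 'v"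
  tgt :: "'e \<Rightarrow> 'v"
  lab :: "'e \<Rightarrow> 'b slabel"

definition wf_graph :: "('v, 'e, 'b) lgraph \<Rightarrow> bool" where
  "wf_graph G \<longleftrightarrow> src G ` edges G \<subseteq> verts G \<and> tgt G ` edges G \<subseteq> verts G"

definition finite_graph :: "('v, 'e, 'b) lgraph \<Rightarrow> bool" where
  "finite_graph G \<longleftrightarrow> finite (verts G) \<and> finite (edges G)"

definition oedges :: "('v, 'e, 'b) lgraph \<Rightarrow> ('e \<times> bool) set" where
  "oedges G = edges G \<times> UNIV"

definition oinv :: "'e \<times> bool \<Rightarrow> 'e \<times> bool" where
  "oinv o' = (fst o', \<not> snd o')"

definition oinit :: "('v, 'e, 'b) lgraph \<Rightarrow> 'e \<times> bool \<Rightarrow> 'v" where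
  "oinit G o' = (if snd o' then src G (fst o') else tgt G (fst o'))"

definition oterm :: "('v, 'e, 'b) lgraph \<Rightarrow> 'e \<times> bool \<Rightarrow> 'v" where
  "oterm G o' = (if snd o' then tgt G (fst o') else src G (fst o'))"

definition olab :: "('v, 'e, 'b) lgraph \<Rightarrow> 'e \<times> bool \<Rightarrow> 'b slabel" where
  "olab G o' = (if snd o' then lab G (fst o') else linv (lab G (fst o')))"

definition adj :: "('v, 'e, 'b) lgraph \<Rightarrow> ('v \<times> 'v) set" where
  "adj G = {(src G e, tgt G e) | e. e \<in> edges G} \<union> {(tgt G e, src G e) | e. e \<in> edges G}"

definition connected_graph :: "('v, 'e, 'b) lgraph \<Rightarrow> bool" where
  "connected_graph G \<longleftrightarrow> verts G \<noteq> {} \<and> (\<forall>u\<in>verts G. \<forall>v\<in>verts G. (u, v) \<in> (adj G)\<^sup>*)"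

definition tight_graph :: "('v, 'e, 'b) lgraph \<Rightarrow> bool" where
  "tight_graph G \<longleftrightarrow> (\<forall>o1\<in>oedges G. \<forall>o2\<in>oedges G.
      o1 \<noteq> o2 \<and> oinit G o1 = oinit G o2 \<longrightarrow> olab G o1 \<noteq> olab G o2)"

definition immersed_loop :: "('v, 'e, 'b) lgraph \<Rightarrow> ('e \<times> bool) list \<Rightarrow> bool" where
  "immersed_loop G p \<longleftrightarrow> p \<noteq> [] \<and> set p \<subseteq> oedges G \<and>
     (\<forall>i < length p. oterm G (p ! i) = oinit G (p ! (Suc i mod length p)) \<and>
                     p ! (Suc i mod length p) \<noteq> oinv (p ! i))"

definition core_edges :: "('v, 'e, 'b) lgraph \<Rightarrow> 'e set" where
  "core_edges G = {e \<in> edges G. \<exists>p d. immersed_loop G p \<and> (e, d) \<in> set p}"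

definition core :: "('v, 'e, 'b) lgraph \<Rightarrow> ('v, 'e, 'b) lgraph" where
  "core G = G\<lparr> verts := src G ` core_edges G \<union> tgt G ` core_edges G,
              edges := core_edges G \<rparr>"

definition is_core :: "('v, 'e, 'b) lgraph \<Rightarrow> bool" where
  "is_core G \<longleftrightarrow> core G = G"

text \<open>The equivalence relations on vertices and on oriented edges produced by
  iterated folding: the least equivalences (compatible with inversion and
  incidence) that identify any two oriented edges with (identified) common initial
  vertex and equal labels.\<close>
inductive fveq :: "('v, 'e, 'b) lgraph \<Rightarrow> 'v \<Rightarrow> 'v \<Rightarrow> bool"
  and foeq :: "('v, 'e, 'b) lgraph \<Rightarrow> 'e \<times> bool \<Rightarrow> 'e \<times> bool \<Rightarrow> bool"
  for G where
  fv_refl: "v \<in> verts G \<Longrightarrow> fveq G v v"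
| fv_sym: "fveq G u v \<Longrightarrow> fveq G v u"
| fv_trans: "fveq G u v \<Longrightarrow> fveq G v w \<Longrightarrow> fveq G u w"
| fv_init: "foeq G o1 o2 \<Longrightarrow> fveq G (oinit G o1) (oinit G o2)"
| fo_refl: "o1 \<in> oedges G \<Longrightarrow> foeq G o1 o1"
| fo_sym: "foeq G o1 o2 \<Longrightarrow> foeq G o2 o1"
| fo_trans: "foeq G o1 o2 \<Longrightarrow> foeq G o2 o3 \<Longrightarrow> foeq G o1 o3"
| fo_inv: "foeq G o1 o2 \<Longrightarrow> foeq G (oinv o1) (oinv o2)"
| fo_fold: "o1 \<in> oedges G \<Longrightarrow> o2 \<in> oedges G \<Longrightarrow> fveq G (oinit G o1) (oinit G o2) \<Longrightarrow>
             olab G o1 = olab G o2 \<Longrightarrow> foeq G o1 o2"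

definition vclass :: "('v, 'e, 'b) lgraph \<Rightarrow> 'v \<Rightarrow> 'v set" where
  "vclass G v = {u. fveq G v u}"

definition oclass :: "('v, 'e, 'b) lgraph \<Rightarrow> 'e \<times> bool \<Rightarrow> ('e \<times> bool) set" where
  "oclass G o' = {o2. foeq G o' o2}"

definition posor :: "('v, 'e, 'b) lgraph \<Rightarrow> 'e \<Rightarrow> 'e \<times> bool" where
  "posor G e = (e, snd (lab G e))"

definition qedge :: "('v, 'e, 'b) lgraph \<Rightarrow> 'e \<Rightarrow> ('e \<times> bool) set" where
  "qedge G e = oclass G (posor G e)"

definition tight :: "('v, 'e, 'b) lgraph \<Rightarrow> ('v set, ('e \<times> bool) set, 'b) lgraph" where
  "tight G = \<lparr> verts = vclass G ` verts G,
               edges = qedge G ` edges G,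
               src = (\<lambda>E. {v. \<exists>o'\<in>E. fveq G (oinit G o') v}),
               tgt = (\<lambda>E. {v. \<exists>o'\<in>E. fveq G (oterm G o') v}),
               lab = (\<lambda>E. olab G (SOME o'. o' \<in> E)) \<rparr>"

text \<open>Each edge e is replaced by a path spelling the word phi (lab e); the k-th
  subedge of e is (e, k).\<close>
definition subpt :: "('b slabel \<Rightarrow> 'b slabel list) \<Rightarrow> ('v, 'e, 'b) lgraph \<Rightarrow> 'e \<Rightarrow> nat \<Rightarrow> 'v + 'e \<times> nat" where
  "subpt phi G e k = (if k = 0 then Inl (src G e)
       else if k = length (phi (lab G e)) then Inl (tgt G e) else Inr (e, k))"

definition subdiv :: "('b slabel \<Rightarrow> 'b slabel list) \<Rightarrow> ('v, 'e, 'b) lgraph \<Rightarrow> ('v + 'e \<times> nat, 'e \<times> nat, 'b) lgraph" where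
  "subdiv phi G = \<lparr> verts = Inl ` verts G \<union> {Inr (e, k) | e k. e \<in> edges G \<and> 0 < k \<and> k < length (phi (lab G e))},
                    edges = {(e, k). e \<in> edges G \<and> k < length (phi (lab G e))},
                    src = (\<lambda>(e, k). subpt phi G e k),
                    tgt = (\<lambda>(e, k). subpt phi G e (Suc k)),
                    lab = (\<lambda>(e, k). phi (lab G e) ! k) \<rparr>"

text \<open>alpha(b^{+-1}) = b^{+-1}, alpha(c) = b^{eps c} c b^{-eps (c^{-1})} otherwise,
  where eps x = 1 iff x in A; the value is the (already reduced) word alpha(c).\<close>
definition whw :: "'b slabel \<Rightarrow> 'b slabel set \<Rightarrow> 'b slabel \<Rightarrow> 'b slabel list" where
  "whw b A x = (if fst x = fst b then [x]
       else (if x \<in> A then [b] else []) @ [x] @ (if linv x \<in> A then [linv b] else []))"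

definition seq_edges :: "('v, 'e, 'b) lgraph list \<Rightarrow> (nat \<times> 'e) set" where
  "seq_edges Gs = {(i, e). i < length Gs \<and> e \<in> edges (Gs ! i)}"

definition alpha_sharp :: "'b slabel \<Rightarrow> 'b slabel set \<Rightarrow> ('v, 'e, 'b) lgraph list
    \<Rightarrow> (('v + 'e \<times> nat) set, (('e \<times> nat) \<times> bool) set, 'b) lgraph list" where
  "alpha_sharp b A Gs = map (\<lambda>G. core (tight (subdiv (whw b A) G))) Gs"

definition cidx :: "'b slabel \<Rightarrow> 'b slabel set \<Rightarrow> 'b slabel \<Rightarrow> nat" where
  "cidx b A x = (THE k. k < length (whw b A x) \<and> fst (whw b A x ! k) = fst x)"

definition eprime :: "'b slabel \<Rightarrow> 'b slabel set \<Rightarrow> ('v, 'e, 'b) lgraph list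
    \<Rightarrow> nat \<times> 'e \<Rightarrow> nat \<times> (('e \<times> nat) \<times> bool) set" where
  "eprime b A Gs ie = (case ie of (i, e) \<Rightarrow>
     (i, qedge (subdiv (whw b A) (Gs ! i)) (e, cidx b A (lab (Gs ! i) e))))"

end

theory Submission imports Defs begin

lemma linv_linv[simp]: "linv (linv x) = x" by (simp add: linv_def)
lemma fst_linv[simp]: "fst (linv x) = fst x" by (simp add: linv_def)
lemma linv_neq[simp]: "linv x \<noteq> x" "x \<noteq> linv x" by (auto simp: linv_def prod_eq_iff)
lemma linv_inj[simp]: "linv x = linv y \<longleftrightarrow> x = y" by (auto simp: linv_def prod_eq_iff)
lemma same_fst_cases: "fst x = fst y \<Longrightarrow> x = y \<or> x = linv y"
  by (cases x; cases y) (auto simp: linv_def)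

lemma oinv_oinv[simp]: "oinv (oinv x) = x" by (simp add: oinv_def)
lemma oinit_oinv[simp]: "oinit G (oinv x) = oterm G x" by (simp add: oinit_def oterm_def oinv_def)
lemma oterm_oinv[simp]: "oterm G (oinv x) = oinit G x" by (simp add: oinit_def oterm_def oinv_def)
lemma olab_oinv[simp]: "olab G (oinv x) = linv (olab G x)" by (simp add: olab_def oinv_def)
lemma oinv_oedges[simp]: "oinv x \<in> oedges G \<longleftrightarrow> x \<in> oedges G" by (cases x) (simp add: oedges_def oinv_def)
lemma oinv_neq[simp]: "oinv x \<noteq> x" "x \<noteq> oinv x" by (auto simp: oinv_def prod_eq_iff)
lemma oinv_inj[simp]: "oinv x = oinv y \<longleftrightarrow> x = y" by (auto simp: oinv_def prod_eq_iff)
lemma fst_oinv[simp]: "fst (oinv x) = fst x" by (simp add: oinv_def)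
lemma snd_oinv[simp]: "snd (oinv x) = (\<not> snd x)" by (simp add: oinv_def)
lemma fst_olab: "fst (olab G x) = fst (lab G (fst x))" by (simp add: olab_def)

lemma whw_nb: "fst x \<noteq> fst b \<Longrightarrow> whw b A x =
   (if x \<in> A then [b] else []) @ [x] @ (if linv x \<in> A then [linv b] else [])"
  by (simp add: whw_def)
lemma whw_b: "fst x = fst b \<Longrightarrow> whw b A x = [x]"
  by (simp add: whw_def)

definition kz :: "'b slabel set \<Rightarrow> 'b slabel \<Rightarrow> nat" where
  "kz A x = (if x \<in> A then 1 else 0)"

lemma whw_len: "fst x \<noteq> fst b \<Longrightarrow> length (whw b A x) =
   Suc (kz A x + (if linv x \<in> A then 1 else 0))"
  by (simp add: whw_nb kz_def)

lemma whw_kz: "fst x \<noteq> fst b \<Longrightarrow> whw b A x ! kz A x = x"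
  by (simp add: whw_nb kz_def nth_append)

lemma whw_other: "fst x \<noteq> fst b \<Longrightarrow> k < length (whw b A x) \<Longrightarrow> k \<noteq> kz A x \<Longrightarrow>
   (k = 0 \<and> x \<in> A \<and> whw b A x ! k = b) \<or>
   (k = Suc (kz A x) \<and> linv x \<in> A \<and> whw b A x ! k = linv b)"
  by (auto simp: whw_nb kz_def nth_append split: if_splits)

lemma whw_fst_iff: "fst x \<noteq> fst b \<Longrightarrow> k < length (whw b A x) \<Longrightarrow>
   fst (whw b A x ! k) \<noteq> fst b \<longleftrightarrow> k = kz A x"
  using whw_other[of x b k A] whw_kz[of x b A] by (cases "k = kz A x") auto

lemma cidx_eq: "fst x \<noteq> fst b \<Longrightarrow> cidx b A x = kz A x"
  unfolding cidx_def
proof (rule the_equality)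
  assume "fst x \<noteq> fst b"
  then show "kz A x < length (whw b A x) \<and> fst (whw b A x ! kz A x) = fst x"
    by (simp add: whw_len whw_kz)
next
  fix k assume "fst x \<noteq> fst b" "k < length (whw b A x) \<and> fst (whw b A x ! k) = fst x"
  then show "k = kz A x" using whw_fst_iff[of x b k A] by auto
qed


definition cycP :: "('a \<Rightarrow> 'a \<Rightarrow> bool) \<Rightarrow> 'a list \<Rightarrow> bool" where
  "cycP R xs \<longleftrightarrow> (\<forall>i<length xs. R (xs ! i) (xs ! (Suc i mod length xs)))"

lemma cycP_iff: assumes "xs \<noteq> []"
  shows "cycP R xs \<longleftrightarrow> successively R xs \<and> R (last xs) (hd xs)"
proof -
  let ?n = "length xs"
  have n: "?n > 0" using assms by simp
  have a: "(\<forall>i<?n. R (xs ! i) (xs ! (Suc i mod ?n))) \<longleftrightarrow>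
        (\<forall>i. Suc i < ?n \<longrightarrow> R (xs ! i) (xs ! Suc i)) \<and> R (xs ! (?n - 1)) (xs ! 0)"
  proof safe
    fix i assume h: "\<forall>i<?n. R (xs ! i) (xs ! (Suc i mod ?n))" "Suc i < ?n"
    then show "R (xs ! i) (xs ! Suc i)" using h(1)[rule_format, of i] by simp
  next
    assume h: "\<forall>i<?n. R (xs ! i) (xs ! (Suc i mod ?n))"
    show "R (xs ! (?n - 1)) (xs ! 0)" using h[rule_format, of "?n - 1"] n by simp
  next
    fix i assume h: "\<forall>i. Suc i < ?n \<longrightarrow> R (xs ! i) (xs ! Suc i)" "R (xs ! (?n - 1)) (xs ! 0)" "i < ?n"
    show "R (xs ! i) (xs ! (Suc i mod ?n))"
    proof (cases "Suc i < ?n")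
      case True then show ?thesis using h by simp
    next
      case False then have "Suc i = ?n" using h(3) by auto
      then have "i = ?n - 1" "Suc i mod ?n = 0" by auto
      then show ?thesis using h(2) by simp
    qed
  qed
  show ?thesis unfolding cycP_def a successively_conv_nth
    using assms by (simp add: last_conv_nth hd_conv_nth)
qed

lemma hd_concat_ne: "segs \<noteq> [] \<Longrightarrow> \<forall>s\<in>set segs. s \<noteq> [] \<Longrightarrow> hd (concat segs) = hd (hd segs)"
  by (cases segs) auto

lemma last_concat_ne: "segs \<noteq> [] \<Longrightarrow> \<forall>s\<in>set segs. s \<noteq> [] \<Longrightarrow> last (concat segs) = last (last segs)"
  by (induction segs) auto

lemma successively_concat: "\<forall>s\<in>set segs. s \<noteq> [] \<Longrightarrow> successively R (concat segs) \<longleftrightarrow>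
   (\<forall>s\<in>set segs. successively R s) \<and> successively (\<lambda>s t. R (last s) (hd t)) segs"
proof (induction segs)
  case Nil then show ?case by simp
next
  case (Cons s segs)
  then show ?case
    by (cases segs) (auto simp: successively_append_iff successively_Cons hd_concat_ne)
qed

lemma cycP_concat: assumes "segs \<noteq> []" "\<forall>s\<in>set segs. s \<noteq> []"
  shows "cycP R (concat segs) \<longleftrightarrow>
   (\<forall>s\<in>set segs. successively R s) \<and> cycP (\<lambda>s t. R (last s) (hd t)) segs"
proof -
  have ne: "concat segs \<noteq> []" using assms by (cases segs) auto
  show ?thesis
    using assms ne by (simp add: cycP_iff successively_concat hd_concat_ne last_concat_ne)
qed

lemma mod_lt_len: "i < length xs \<Longrightarrow> Suc i mod length xs < length xs"
  by (intro mod_less_divisor) auto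

lemma cycP_map: "cycP R (map f xs) \<longleftrightarrow> cycP (\<lambda>x y. R (f x) (f y)) xs"
  unfolding cycP_def by (simp add: mod_lt_len)

lemma cycP_mono: assumes "cycP R xs" "\<And>x y. x \<in> set xs \<Longrightarrow> y \<in> set xs \<Longrightarrow> R x y \<Longrightarrow> Q x y"
  shows "cycP Q xs"
  unfolding cycP_def
proof safe
  fix i assume i: "i < length xs"
  then have "Suc i mod length xs < length xs" by (rule mod_lt_len)
  then show "Q (xs ! i) (xs ! (Suc i mod length xs))"
    using assms i unfolding cycP_def by (meson nth_mem)
qed

lemma cycP_rotate1: assumes "cycP R xs" shows "cycP R (rotate1 xs)"
proof (cases xs)
  case Nil then show ?thesis using assms by simp
next
  case (Cons x ys)
  have h: "successively R (x # ys)" "R (last (x # ys)) x"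
    using assms Cons cycP_iff[of xs R] by auto
  show ?thesis
  proof (cases "ys = []")
    case True then show ?thesis using assms Cons by simp
  next
    case False
    have "successively R (ys @ [x])"
      using h False by (auto simp: successively_append_iff successively_Cons)
    moreover have "R x (hd (ys @ [x]))"
      using h False by (auto simp: successively_Cons)
    ultimately show ?thesis using Cons cycP_iff[of "ys @ [x]" R] by simp
  qed
qed

lemma cycP_rotate: "cycP R xs \<Longrightarrow> cycP R (rotate k xs)"
  by (induction k) (auto simp: cycP_rotate1)

lemma immersed_loop_iff: "immersed_loop G p \<longleftrightarrow> p \<noteq> [] \<and> set p \<subseteq> oedges G \<and>
    cycP (\<lambda>x y. oterm G x = oinit G y \<and> y \<noteq> oinv x) p"
  unfolding immersed_loop_def cycP_def by auto

lemma immersed_rotate: assumes "immersed_loop G p" "z \<in> set p"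
  shows "\<exists>q. immersed_loop G q \<and> hd q = z"
proof -
  obtain i where i: "i < length p" "p ! i = z" using assms(2) by (auto simp: in_set_conv_nth)
  have ne: "rotate i p \<noteq> []" using i by auto
  have "hd (rotate i p) = rotate i p ! 0" using ne by (rule hd_conv_nth)
  also have "\<dots> = p ! ((i + 0) mod length p)" using i by (intro nth_rotate) auto
  also have "\<dots> = z" using i by simp
  finally have "hd (rotate i p) = z" .
  moreover have "immersed_loop G (rotate i p)"
    using assms(1) unfolding immersed_loop_iff by (auto simp: cycP_rotate)
  ultimately show ?thesis by blast
qed

function blocks :: "('a \<Rightarrow> bool) \<Rightarrow> 'a list \<Rightarrow> ('a \<times> 'a list) list" where
  "blocks P [] = []"
| "blocks P (x # xs) = (x, takeWhile P xs) # blocks P (dropWhile P xs)"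
  by pat_completeness auto
termination
  by (relation "measure (\<lambda>(P, xs). length xs)") (auto simp: le_imp_less_Suc length_dropWhile_le)

lemma blocks_concat: "concat (map (\<lambda>(c, r). c # r) (blocks P xs)) = xs"
  by (induction P xs rule: blocks.induct) auto

lemma blocks_run: "(c, r) \<in> set (blocks P xs) \<Longrightarrow> y \<in> set r \<Longrightarrow> P y"
  by (induction P xs rule: blocks.induct) (auto dest: set_takeWhileD)

lemma blocks_head: "xs = [] \<or> \<not> P (hd xs) \<Longrightarrow> (c, r) \<in> set (blocks P xs) \<Longrightarrow> \<not> P c"
proof (induction P xs rule: blocks.induct)
  case (2 P x xs)
  have "dropWhile P xs = [] \<or> \<not> P (hd (dropWhile P xs))"
    by (metis hd_dropWhile)
  then show ?case using 2 by auto
qed simp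

lemma blocks_ne: "xs \<noteq> [] \<Longrightarrow> blocks P xs \<noteq> [] \<and> fst (hd (blocks P xs)) = hd xs"
  by (cases xs) auto

locale whl =
  fixes b :: "'b slabel" and A :: "'b slabel set" and G :: "('v, 'e, 'b) lgraph"
  assumes tightG: "tight_graph G" and Asub: "A \<subseteq> UNIV - {b, linv b}"
begin

abbreviation "W \<equiv> whw b A"
abbreviation "S \<equiv> subdiv (whw b A) G"

definition len :: "'e \<Rightarrow> nat" where "len e = length (W (lab G e))"
definition k0 :: "'e \<Rightarrow> nat" where "k0 e = kz A (lab G e)"
definition cS :: "'e \<times> bool \<Rightarrow> ('e \<times> nat) \<times> bool" where
  "cS x = ((fst x, k0 (fst x)), snd x)"
definition headS :: "'e \<times> bool \<Rightarrow> ('e \<times> nat) \<times> bool" where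
  "headS x = (if snd x then ((fst x, 0), True) else ((fst x, len (fst x) - 1), False))"
definition bS :: "'e \<times> bool \<Rightarrow> ('e \<times> nat) \<times> bool" where
  "bS x = ((fst x, 0), snd x)"
definition isb :: "'e \<times> bool \<Rightarrow> bool" where
  "isb x \<longleftrightarrow> fst (lab G (fst x)) = fst b"

lemma A_nb: "x \<in> A \<Longrightarrow> fst x \<noteq> fst b"
  using Asub same_fst_cases[of x b] by auto

lemma b_notA[simp]: "b \<notin> A" "linv b \<notin> A" using Asub by auto

lemma S_simps:
  "edges S = {(e, k). e \<in> edges G \<and> k < len e}"
  "src S = (\<lambda>(e, k). subpt W G e k)"
  "tgt S = (\<lambda>(e, k). subpt W G e (Suc k))"
  "lab S = (\<lambda>(e, k). W (lab G e) ! k)"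
  by (auto simp: subdiv_def len_def)

lemma olab_G_cases: "olab G (e, d) = (if d then lab G e else linv (lab G e))"
  by (simp add: olab_def)

lemma cS_props:
  assumes "x \<in> oedges G" "\<not> isb x"
  shows "cS x \<in> oedges S" "olab S (cS x) = olab G x" "cS (oinv x) = oinv (cS x)"
    "olab G x \<notin> A \<Longrightarrow> oinit S (cS x) = Inl (oinit G x)"
proof -
  obtain e d where x: "x = (e, d)" by (cases x)
  have e: "e \<in> edges G" using assms x by (auto simp: oedges_def)
  have nb: "fst (lab G e) \<noteq> fst b" using assms x by (simp add: isb_def)
  show "cS x \<in> oedges S" using e nb
    by (simp add: x cS_def oedges_def S_simps len_def k0_def whw_len)
  show "olab S (cS x) = olab G x" using nb
    by (simp add: x cS_def olab_def S_simps k0_def whw_kz)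
  show "cS (oinv x) = oinv (cS x)" by (simp add: x cS_def oinv_def)
  show "olab G x \<notin> A \<Longrightarrow> oinit S (cS x) = Inl (oinit G x)" using nb
    by (cases d) (auto simp: x cS_def oinit_def olab_def S_simps k0_def kz_def whw_len subpt_def)
qed

lemma headS_props:
  assumes "x \<in> oedges G" "\<not> isb x" "olab G x \<in> A"
  shows "headS x \<in> oedges S" "olab S (headS x) = b" "oinit S (headS x) = Inl (oinit G x)"
    "oterm S (headS x) = oinit S (cS x)"
proof -
  obtain e d where x: "x = (e, d)" by (cases x)
  have e: "e \<in> edges G" using assms x by (auto simp: oedges_def)
  have nb: "fst (lab G e) \<noteq> fst b" using assms x by (simp add: isb_def)
  show "headS x \<in> oedges S" using e nb
    by (simp add: x headS_def oedges_def S_simps len_def k0_def whw_len)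
  show "olab S (headS x) = b" using nb assms(3)
    by (cases d) (auto simp: x headS_def olab_def S_simps len_def whw_nb nth_append)
  show "oinit S (headS x) = Inl (oinit G x)" using nb assms(3)
    by (cases d) (auto simp: x headS_def oinit_def olab_def S_simps len_def whw_len subpt_def)
  show "oterm S (headS x) = oinit S (cS x)" using nb assms(3)
    by (cases d) (auto simp: x headS_def cS_def oinit_def oterm_def olab_def S_simps len_def k0_def kz_def whw_len subpt_def)
qed

lemma bS_props:
  assumes "x \<in> oedges G" "isb x"
  shows "bS x \<in> oedges S" "olab S (bS x) = olab G x" "oinit S (bS x) = Inl (oinit G x)"
    "oterm S (bS x) = Inl (oterm G x)" "bS (oinv x) = oinv (bS x)"
proof -
  obtain e d where x: "x = (e, d)" by (cases x)
  have e: "e \<in> edges G" using assms x by (auto simp: oedges_def)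
  have nb: "fst (lab G e) = fst b" using assms x by (simp add: isb_def)
  show "bS x \<in> oedges S" using e nb
    by (simp add: x bS_def oedges_def S_simps len_def whw_b)
  show "olab S (bS x) = olab G x" using nb
    by (cases d) (auto simp: x bS_def olab_def S_simps whw_b)
  show "oinit S (bS x) = Inl (oinit G x)" using nb
    by (cases d) (auto simp: x bS_def oinit_def S_simps whw_b subpt_def)
  show "oterm S (bS x) = Inl (oterm G x)" using nb
    by (cases d) (auto simp: x bS_def oterm_def S_simps whw_b subpt_def)
  show "bS (oinv x) = oinv (bS x)" by (simp add: x bS_def oinv_def)
qed


lemma tight_eq: "x \<in> oedges G \<Longrightarrow> y \<in> oedges G \<Longrightarrow> oinit G x = oinit G y \<Longrightarrow>
    olab G x = olab G y \<Longrightarrow> x = y"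
  using tightG unfolding tight_graph_def by blast

definition mid :: "'v \<Rightarrow> 'v + 'v" where
  "mid v = (if \<exists>x\<in>oedges G. oinit G x = v \<and> olab G x = b
     then Inl (oterm G (SOME x. x \<in> oedges G \<and> oinit G x = v \<and> olab G x = b)) else Inr v)"

lemma mid_b: assumes "x \<in> oedges G" "olab G x = b" shows "mid (oinit G x) = Inl (oterm G x)"
proof -
  let ?P = "\<lambda>y. y \<in> oedges G \<and> oinit G y = oinit G x \<and> olab G y = b"
  have "?P x" using assms by auto
  then have "?P (SOME y. ?P y)" by (rule someI)
  then have "(SOME y. ?P y) = x" using tight_eq assms by auto
  then show ?thesis using assms unfolding mid_def by auto
qed

lemma mid_inj: assumes "mid v = mid w" shows "v = w"
proof (cases "\<exists>x\<in>oedges G. oinit G x = v \<and> olab G x = b")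
  case True
  then obtain x where x: "x \<in> oedges G" "oinit G x = v" "olab G x = b" by auto
  show ?thesis
  proof (cases "\<exists>x\<in>oedges G. oinit G x = w \<and> olab G x = b")
    case True
    then obtain y where y: "y \<in> oedges G" "oinit G y = w" "olab G y = b" by auto
    have "oterm G x = oterm G y" using assms mid_b[OF x(1,3)] mid_b[OF y(1,3)] x y by simp
    then have "oinv x = oinv y" using tight_eq[of "oinv x" "oinv y"] x y by simp
    then show ?thesis using x y by simp
  next
    case False
    then have "mid w = Inr w" unfolding mid_def by auto
    then show ?thesis using assms mid_b[OF x(1,3)] x by simp
  qed
next
  case False
  then have "mid v = Inr v" unfolding mid_def by auto
  then show ?thesis using assms unfolding mid_def by (auto split: if_splits)
qed

definition psi :: "'v + 'e \<times> nat \<Rightarrow> 'v + 'v" where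
  "psi z = (case z of Inl v \<Rightarrow> Inl v
     | Inr (e, k) \<Rightarrow> (if k = 1 \<and> lab G e \<in> A then mid (src G e) else mid (tgt G e)))"

definition start :: "'e \<times> bool \<Rightarrow> 'v + 'v" where
  "start x = (if olab G x \<in> A then mid (oinit G x) else Inl (oinit G x))"

lemma psi_cS: assumes "x \<in> oedges G" "\<not> isb x"
  shows "psi (oinit S (cS x)) = start x"
proof -
  obtain e d where x: "x = (e, d)" by (cases x)
  have nb: "fst (lab G e) \<noteq> fst b" using assms x by (simp add: isb_def)
  show ?thesis using nb
    by (cases d) (auto simp: x cS_def start_def psi_def oinit_def olab_def S_simps k0_def kz_def
        whw_len subpt_def)
qed

lemma ctype: assumes "y \<in> oedges S" "fst (olab S y) \<noteq> fst b"
  shows "\<exists>x. x \<in> oedges G \<and> \<not> isb x \<and> y = cS x"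
proof -
  obtain e k d where y: "y = ((e, k), d)" by (cases y) auto
  have e: "e \<in> edges G" "k < len e" using assms y by (auto simp: oedges_def S_simps)
  have lab: "fst (W (lab G e) ! k) \<noteq> fst b" using assms y by (simp add: S_simps fst_olab)
  have nb: "fst (lab G e) \<noteq> fst b"
    using lab e by (auto simp: whw_b len_def)
  have "k = k0 e" using whw_fst_iff[OF nb, of k A] e lab by (simp add: len_def k0_def)
  then show ?thesis using e nb
    by (intro exI[of _ "(e, d)"]) (simp add: y cS_def isb_def oedges_def)
qed

lemma btype: assumes "y \<in> oedges S" "fst (olab S y) = fst b"
  shows "\<exists>v. (olab S y = b \<and> psi (oinit S y) = Inl v \<and> psi (oterm S y) = mid v) \<or>
             (olab S y = linv b \<and> psi (oinit S y) = mid v \<and> psi (oterm S y) = Inl v)"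
proof -
  obtain e k d where y: "y = ((e, k), d)" by (cases y) auto
  have e: "e \<in> edges G" "k < len e" using assms y by (auto simp: oedges_def S_simps)
  have lab: "fst (W (lab G e) ! k) = fst b" using assms y by (simp add: S_simps fst_olab)
  have ed: "(e, True) \<in> oedges G" "(e, False) \<in> oedges G" using e by (auto simp: oedges_def)
  show ?thesis
  proof (cases "fst (lab G e) = fst b")
    case True
    then have k: "k = 0" using e by (simp add: len_def whw_b)
    have ib: "isb (e, d)" using True by (simp add: isb_def)
    have yb: "y = bS (e, d)" by (simp add: y k bS_def)
    have ed': "(e, d) \<in> oedges G" using e by (simp add: oedges_def)
    note bp = bS_props[OF ed' ib]
    have "olab G (e, d) = b \<or> olab G (e, d) = linv b"
      using same_fst_cases[of "olab G (e, d)" b] True by (simp add: fst_olab)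
    then show ?thesis
    proof
      assume l: "olab G (e, d) = b"
      show ?thesis
        by (rule exI[of _ "oinit G (e, d)"]) (simp add: yb bp l mid_b[OF ed' l] psi_def)
    next
      assume l: "olab G (e, d) = linv b"
      have l2: "olab G (oinv (e, d)) = b" using l by simp
      have m: "mid (oterm G (e, d)) = Inl (oinit G (e, d))"
        using mid_b[OF _ l2] ed' by simp
      show ?thesis
        by (rule exI[of _ "oterm G (e, d)"]) (simp add: yb bp l m psi_def)
    qed
  next
    case False
    have nk: "k \<noteq> kz A (lab G e)" using whw_kz[OF False, of A] lab False by auto
    have "(k = 0 \<and> lab G e \<in> A \<and> W (lab G e) ! k = b) \<or>
          (k = Suc (kz A (lab G e)) \<and> linv (lab G e) \<in> A \<and> W (lab G e) ! k = linv b)"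
      using whw_other[OF False, of k A] e nk by (simp add: len_def)
    then show ?thesis
    proof
      assume h: "k = 0 \<and> lab G e \<in> A \<and> W (lab G e) ! k = b"
      have nbx: "\<not> isb (e, True)" using False by (simp add: isb_def)
      have inA: "olab G (e, True) \<in> A" using h by (simp add: olab_def)
      note hp = headS_props[OF ed(1) nbx inA]
      have hs: "headS (e, True) = ((e, 0), True)" by (simp add: headS_def)
      have st: "psi (oterm S (headS (e, True))) = mid (src G e)"
        using hp(4) psi_cS[OF ed(1) nbx] inA by (simp add: start_def oinit_def)
      have i0: "psi (oinit S (headS (e, True))) = Inl (src G e)"
        using hp(3) by (simp add: psi_def oinit_def)
      show ?thesis
      proof (cases d)
        case True
        then have "y = headS (e, True)" using h by (simp add: y hs)
        then show ?thesis using hp st i0 by auto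
      next
        case False
        then have "y = oinv (headS (e, True))" using h by (simp add: y hs oinv_def)
        then show ?thesis using hp st i0 by auto
      qed
    next
      assume h: "k = Suc (kz A (lab G e)) \<and> linv (lab G e) \<in> A \<and> W (lab G e) ! k = linv b"
      have nbx: "\<not> isb (e, False)" using False by (simp add: isb_def)
      have inA: "olab G (e, False) \<in> A" using h by (simp add: olab_def)
      note hp = headS_props[OF ed(2) nbx inA]
      have hs: "headS (e, False) = ((e, k), False)"
        using h False by (simp add: headS_def len_def whw_len)
      have st: "psi (oterm S (headS (e, False))) = mid (tgt G e)"
        using hp(4) psi_cS[OF ed(2) nbx] inA by (simp add: start_def oinit_def)
      have i0: "psi (oinit S (headS (e, False))) = Inl (tgt G e)"
        using hp(3) by (simp add: psi_def oinit_def)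
      show ?thesis
      proof (cases d)
        case False
        then have "y = headS (e, False)" by (simp add: y hs)
        then show ?thesis using hp st i0 by auto
      next
        case True
        then have "y = oinv (headS (e, False))" by (simp add: y hs oinv_def)
        then show ?thesis using hp st i0 by auto
      qed
    qed
  qed
qed


definition phi :: "('e \<times> nat) \<times> bool \<Rightarrow> ('e \<times> bool) + (('v + 'v) \<times> 'b slabel)" where
  "phi y = (if fst (olab S y) \<noteq> fst b then Inl (fst (fst y), snd y)
            else Inr (psi (oinit S y), olab S y))"

lemma phi_cS: "phi (cS x) = Inl x" if "x \<in> oedges G" "\<not> isb x"
  using cS_props[OF that] that by (simp add: phi_def cS_def isb_def fst_olab)

lemma start_inj: assumes "x1 \<in> oedges G" "x2 \<in> oedges G" "olab G x1 = olab G x2"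
  "start x1 = start x2" shows "x1 = x2"
proof -
  have "oinit G x1 = oinit G x2"
    using assms mid_inj unfolding start_def by (auto split: if_splits)
  then show ?thesis using tight_eq assms by auto
qed

lemma invariant:
  "(fveq S u w \<longrightarrow> psi u = psi w) \<and>
   (foeq S y1 y2 \<longrightarrow> y1 \<in> oedges S \<and> y2 \<in> oedges S \<and> olab S y1 = olab S y2 \<and> phi y1 = phi y2)"
proof (induction rule: fveq_foeq.induct)
  case (fv_init o1 o2)
  show ?case
  proof (cases "fst (olab S o1) = fst b")
    case True
    then show ?thesis using fv_init.IH by (auto simp: phi_def simp del: fst_olab)
  next
    case False
    obtain x1 where x1: "x1 \<in> oedges G" "\<not> isb x1" "o1 = cS x1" using ctype False fv_init.IH by blast
    obtain x2 where x2: "x2 \<in> oedges G" "\<not> isb x2" "o2 = cS x2" using ctype False fv_init.IH by metis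
    have "x1 = x2" using fv_init.IH x1 x2 phi_cS by auto
    then show ?thesis using x1 x2 by simp
  qed
next
  case (fo_inv o1 o2)
  show ?case
  proof (cases "fst (olab S o1) = fst b")
    case False
    then show ?thesis using fo_inv.IH by (auto simp: phi_def)
  next
    case True
    have T2: "fst (olab S o2) = fst b" using True fo_inv.IH by simp
    obtain v1 where v1: "(olab S o1 = b \<and> psi (oinit S o1) = Inl v1 \<and> psi (oterm S o1) = mid v1) \<or>
             (olab S o1 = linv b \<and> psi (oinit S o1) = mid v1 \<and> psi (oterm S o1) = Inl v1)"
      using btype True fo_inv.IH by blast
    obtain v2 where v2: "(olab S o2 = b \<and> psi (oinit S o2) = Inl v2 \<and> psi (oterm S o2) = mid v2) \<or>
             (olab S o2 = linv b \<and> psi (oinit S o2) = mid v2 \<and> psi (oterm S o2) = Inl v2)"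
      using btype T2 fo_inv.IH by blast
    have pi: "psi (oinit S o1) = psi (oinit S o2)" using fo_inv.IH True by (simp add: phi_def)
    have "psi (oterm S o1) = psi (oterm S o2)"
      using v1 v2 pi fo_inv.IH mid_inj by auto
    then show ?thesis using fo_inv.IH True by (simp add: phi_def)
  qed
next
  case (fo_fold o1 o2)
  show ?case
  proof (cases "fst (olab S o1) = fst b")
    case True
    then show ?thesis using fo_fold by (simp add: phi_def)
  next
    case False
    obtain x1 where x1: "x1 \<in> oedges G" "\<not> isb x1" "o1 = cS x1" using ctype False fo_fold by blast
    have F2: "fst (olab S o2) \<noteq> fst b" using False fo_fold by simp
    obtain x2 where x2: "x2 \<in> oedges G" "\<not> isb x2" "o2 = cS x2" using ctype F2 fo_fold by blast
    have l: "olab G x1 = olab G x2" using fo_fold x1 x2 cS_props by metis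
    have "start x1 = start x2" using fo_fold x1 x2 psi_cS by metis
    then have "x1 = x2" using start_inj x1 x2 l by blast
    then show ?thesis using x1 x2 fo_fold by simp
  qed
qed auto

lemma foeq_props: "foeq S y1 y2 \<Longrightarrow> y1 \<in> oedges S \<and> y2 \<in> oedges S \<and> olab S y1 = olab S y2 \<and> phi y1 = phi y2"
  using invariant by blast


abbreviation "T \<equiv> tight S"

definition timg :: "('e \<times> nat) \<times> bool \<Rightarrow> (('e \<times> nat) \<times> bool) set \<times> bool" where
  "timg y = (qedge S (fst y), snd y = snd (lab S (fst y)))"

lemma fveq_refl_o: "y \<in> oedges S \<Longrightarrow> fveq S (oinit S y) (oinit S y)"
  by (rule fv_init, rule fo_refl)

lemma bfold: assumes "y1 \<in> oedges S" "y2 \<in> oedges S" "olab S y1 = olab S y2"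
  "fveq S (oinit S y1) (oinit S y2)" shows "fveq S (oterm S y1) (oterm S y2)"
proof -
  have "foeq S y1 y2" using assms by (intro fo_fold) auto
  then have "foeq S (oinv y1) (oinv y2)" by (rule fo_inv)
  then show ?thesis using fv_init by fastforce
qed

lemma vclass_eq: "fveq S u w \<Longrightarrow> vclass S u = vclass S w"
  unfolding vclass_def by (auto intro: fv_trans fv_sym)

lemma posor_cases: "y = posor S (fst y) \<or> y = oinv (posor S (fst y))"
  by (cases y) (auto simp: posor_def oinv_def)

lemma timg_oinv: "timg (oinv y) = oinv (timg y)"
  by (auto simp: timg_def oinv_def)

lemma timg_oedges: "y \<in> oedges S \<Longrightarrow> timg y \<in> oedges T"
  by (auto simp: timg_def oedges_def tight_def)

lemma timg_init: assumes "y \<in> oedges S" shows "oinit T (timg y) = vclass S (oinit S y)"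
proof (cases "snd y = snd (lab S (fst y))")
  case True
  then have py: "posor S (fst y) = y" by (cases y) (simp add: posor_def)
  have "oinit T (timg y) = {v. \<exists>z. foeq S y z \<and> fveq S (oinit S z) v}"
    using True py by (simp add: timg_def oinit_def tight_def qedge_def oclass_def)
  also have "\<dots> = vclass S (oinit S y)"
    unfolding vclass_def
  proof (rule set_eqI, unfold mem_Collect_eq, rule iffI)
    fix v assume "\<exists>z. foeq S y z \<and> fveq S (oinit S z) v"
    then obtain z where z: "foeq S y z" "fveq S (oinit S z) v" by auto
    have "fveq S (oinit S y) (oinit S z)" using fv_init[OF z(1)] .
    then show "fveq S (oinit S y) v" using z(2) by (rule fv_trans)
  next
    fix v assume "fveq S (oinit S y) v"
    moreover have "foeq S y y" using assms by (intro fo_refl)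
    ultimately show "\<exists>z. foeq S y z \<and> fveq S (oinit S z) v" by blast
  qed
  finally show ?thesis .
next
  case False
  then have py: "posor S (fst y) = oinv y" by (cases y) (simp add: posor_def oinv_def)
  have "oinit T (timg y) = {v. \<exists>z. foeq S (oinv y) z \<and> fveq S (oterm S z) v}"
    using False py by (simp add: timg_def oinit_def tight_def qedge_def oclass_def)
  also have "\<dots> = vclass S (oinit S y)"
    unfolding vclass_def
  proof (rule set_eqI, unfold mem_Collect_eq, rule iffI)
    fix v assume "\<exists>z. foeq S (oinv y) z \<and> fveq S (oterm S z) v"
    then obtain z where z: "foeq S (oinv y) z" "fveq S (oterm S z) v" by auto
    have "foeq S y (oinv z)" using fo_inv[OF z(1)] by simp
    then have "fveq S (oinit S y) (oterm S z)" using fv_init by fastforce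
    then show "fveq S (oinit S y) v" using z(2) by (rule fv_trans)
  next
    fix v assume "fveq S (oinit S y) v"
    moreover have "foeq S (oinv y) (oinv y)" using assms by (intro fo_refl) simp
    ultimately show "\<exists>z. foeq S (oinv y) z \<and> fveq S (oterm S z) v" using oterm_oinv by metis
  qed
  finally show ?thesis .
qed

lemma timg_term: assumes "y \<in> oedges S" shows "oterm T (timg y) = vclass S (oterm S y)"
proof -
  have "oterm T (timg y) = oinit T (timg (oinv y))" by (simp add: timg_oinv)
  also have "\<dots> = vclass S (oterm S y)" using timg_init[of "oinv y"] assms by simp
  finally show ?thesis .
qed

lemma timg_consec: assumes "x \<in> oedges S" "y \<in> oedges S" "fveq S (oterm S x) (oinit S y)"
  shows "oterm T (timg x) = oinit T (timg y)"
  using assms timg_init timg_term vclass_eq by metis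

lemma timg_back: assumes "x \<in> oedges S" "y \<in> oedges S" "timg y = oinv (timg x)"
  shows "foeq S y (oinv x)"
proof -
  have q: "qedge S (fst y) = qedge S (fst x)" and
     d: "(snd y = snd (lab S (fst y))) = (\<not> (snd x = snd (lab S (fst x))))"
    using assms(3) by (auto simp: timg_def oinv_def)
  have py: "posor S (fst y) \<in> oedges S" using assms(2) by (cases y) (simp add: posor_def oedges_def)
  have "foeq S (posor S (fst y)) (posor S (fst y))" using py by (rule fo_refl)
  then have "posor S (fst y) \<in> qedge S (fst y)" by (simp add: qedge_def oclass_def)
  then have "posor S (fst y) \<in> qedge S (fst x)" using q by simp
  then have f: "foeq S (posor S (fst x)) (posor S (fst y))"
    by (simp add: qedge_def oclass_def)
  show ?thesis
  proof (cases "snd x = snd (lab S (fst x))")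
    case True
    then have "x = posor S (fst x)" "y = oinv (posor S (fst y))" using d
      by (cases x, cases y, simp add: posor_def oinv_def)+
    then show ?thesis using fo_inv[OF fo_sym[OF f]] by metis
  next
    case False
    then have "oinv x = posor S (fst x)" "y = posor S (fst y)" using d
      by (cases x, cases y, simp add: posor_def oinv_def)+
    then show ?thesis using fo_sym[OF f] by metis
  qed
qed


definition RG :: "'e \<times> bool \<Rightarrow> 'e \<times> bool \<Rightarrow> bool" where
  "RG x y \<longleftrightarrow> oterm G x = oinit G y \<and> y \<noteq> oinv x"
definition RS :: "('e \<times> nat) \<times> bool \<Rightarrow> ('e \<times> nat) \<times> bool \<Rightarrow> bool" where
  "RS x y \<longleftrightarrow> fveq S (oterm S x) (oinit S y) \<and> \<not> foeq S y (oinv x)"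

definition tailS :: "'e \<times> bool \<Rightarrow> ('e \<times> nat) \<times> bool" where
  "tailS x = oinv (headS (oinv x))"

definition Hh :: "'e \<times> bool \<Rightarrow> (('e \<times> nat) \<times> bool) list" where
  "Hh c' = (if olab G c' \<in> A then [headS c'] else [])"

definition betapos :: "'e \<times> bool \<Rightarrow> ('e \<times> bool) list \<Rightarrow> 'e \<times> bool \<Rightarrow> (('e \<times> nat) \<times> bool) list" where
  "betapos c r c' = (if r = [] then
       (if olab G (oinv c) \<in> A \<and> olab G c' \<notin> A then [tailS c] else []) @
       (if olab G c' \<in> A \<and> olab G (oinv c) \<notin> A then [headS c'] else [])
     else map bS (if olab G (oinv c) \<in> A then tl r else r) @ Hh c')"

definition beta :: "'e \<times> bool \<Rightarrow> ('e \<times> bool) list \<Rightarrow> 'e \<times> bool \<Rightarrow> (('e \<times> nat) \<times> bool) list" where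
  "beta c r c' = (if r \<noteq> [] \<and> olab G (hd r) = linv b
     then rev (map oinv (betapos (oinv c') (rev (map oinv r)) (oinv c))) else betapos c r c')"

lemma isb_oinv[simp]: "isb (oinv x) = isb x" by (simp add: isb_def)

lemma isb_lab: "olab G y = b \<Longrightarrow> isb y" "olab G y = linv b \<Longrightarrow> isb y"
  by (metis fst_olab isb_def fst_linv)+

lemma nb_neq: "\<not> isb x \<Longrightarrow> olab G x \<noteq> b \<and> olab G x \<noteq> linv b \<and> b \<noteq> olab G x \<and> linv b \<noteq> olab G x"
  using isb_lab by metis

lemma foeq_lab: "foeq S y1 y2 \<Longrightarrow> olab S y1 = olab S y2" using foeq_props by blast

lemma fveq_refl_G: assumes "x \<in> oedges G" shows "fveq S (Inl (oinit G x)) (Inl (oinit G x))"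
proof (cases "isb x")
  case True
  then show ?thesis using bS_props[OF assms True] fveq_refl_o by metis
next
  case nb: False
  show ?thesis
  proof (cases "olab G x \<in> A")
    case True
    then show ?thesis using headS_props[OF assms nb True] fveq_refl_o by metis
  next
    case False
    then show ?thesis using cS_props[OF assms nb] fveq_refl_o by metis
  qed
qed

lemma runS:
  assumes "c' \<in> oedges G" "\<not> isb c'" "set r \<subseteq> oedges G" "\<forall>y\<in>set r. olab G y = b"
    "successively RG (r @ [c'])"
  shows "successively RS (map bS r @ Hh c' @ [cS c']) \<and>
    oinit S (hd (map bS r @ Hh c' @ [cS c'])) = Inl (oinit G (hd (r @ [c']))) \<and>
    (olab S (hd (map bS r @ Hh c' @ [cS c'])) = b \<or> (r = [] \<and> olab G c' \<notin> A \<and> hd (map bS r @ Hh c' @ [cS c']) = cS c')) \<and>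
    set (map bS r @ Hh c' @ [cS c']) \<subseteq> oedges S"
  using assms(3-5)
proof (induction r)
  case Nil
  note cp = cS_props[OF assms(1,2)]
  show ?case
  proof (cases "olab G c' \<in> A")
    case True
    note hp = headS_props[OF assms(1,2) True]
    have "\<not> foeq S (cS c') (oinv (headS c'))"
      using foeq_lab[of "cS c'" "oinv (headS c')"] cp hp nb_neq[OF assms(2)] by auto
    moreover have "fveq S (oterm S (headS c')) (oinit S (cS c'))"
      using hp fveq_refl_o[OF cp(1)] by simp
    ultimately show ?thesis using True hp cp by (simp add: Hh_def RS_def)
  next
    case False
    then show ?thesis using cp by (simp add: Hh_def)
  qed
next
  case (Cons y ys)
  have y: "y \<in> oedges G" "olab G y = b" "isb y" using Cons.prems isb_lab by auto
  have ch: "RG y (hd (ys @ [c']))" "successively RG (ys @ [c'])"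
    using Cons.prems(3) by (auto simp: successively_Cons)
  have IH: "successively RS (map bS ys @ Hh c' @ [cS c']) \<and>
    oinit S (hd (map bS ys @ Hh c' @ [cS c'])) = Inl (oinit G (hd (ys @ [c']))) \<and>
    (olab S (hd (map bS ys @ Hh c' @ [cS c'])) = b \<or> (ys = [] \<and> olab G c' \<notin> A \<and> hd (map bS ys @ Hh c' @ [cS c']) = cS c')) \<and>
    set (map bS ys @ Hh c' @ [cS c']) \<subseteq> oedges S"
    by (rule Cons.IH) (use Cons.prems ch(2) in simp_all)
  let ?L = "map bS ys @ Hh c' @ [cS c']"
  have "hd ?L \<in> set ?L" by (rule hd_in_set) simp
  then have hdin: "hd ?L \<in> oedges S" using IH by blast
  note bp = bS_props[OF y(1) y(3)]
  have "fveq S (oterm S (bS y)) (oinit S (hd ?L))"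
    using bp IH ch(1) fveq_refl_o[OF hdin] by (simp add: RG_def)
  moreover have "\<not> foeq S (hd ?L) (oinv (bS y))"
  proof
    assume "foeq S (hd ?L) (oinv (bS y))"
    then have "olab S (hd ?L) = linv b" using foeq_lab bp y by simp
    then show False using IH cS_props[OF assms(1,2)] nb_neq[OF assms(2)] by auto
  qed
  ultimately have "RS (bS y) (hd ?L)" by (simp add: RS_def)
  then show ?case using IH bp y by (simp add: successively_Cons)
qed

lemma junction:
  assumes "c \<in> oedges G" "\<not> isb c" "c' \<in> oedges G" "\<not> isb c'" "set r \<subseteq> oedges G"
    "\<forall>y\<in>set r. olab G y = b" "successively RG (r @ [c'])"
    "fveq S (oterm S (cS c)) (Inl (oinit G (hd (r @ [c']))))"
    "r = [] \<and> olab G c' \<notin> A \<longrightarrow> c' \<noteq> oinv c"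
  shows "successively RS (cS c # map bS r @ Hh c' @ [cS c']) \<and> set (map bS r @ Hh c' @ [cS c']) \<subseteq> oedges S"
proof -
  let ?L = "map bS r @ Hh c' @ [cS c']"
  note R = runS[OF assms(3-7)]
  have "hd ?L \<in> set ?L" by (rule hd_in_set) simp
  then have hdin: "hd ?L \<in> oedges S" using R by blast
  have "\<not> foeq S (hd ?L) (oinv (cS c))"
  proof
    assume f: "foeq S (hd ?L) (oinv (cS c))"
    then have l: "olab S (hd ?L) = linv (olab G c)" using foeq_lab cS_props[OF assms(1,2)] by simp
    show False
    proof (cases "olab S (hd ?L) = b")
      case True then show ?thesis using l nb_neq[OF assms(2)] by (metis linv_linv)
    next
      case False
      then have h: "r = [] \<and> olab G c' \<notin> A \<and> hd ?L = cS c'" using R by blast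
      then have "foeq S (cS c') (cS (oinv c))" using f cS_props(3)[OF assms(1,2)] by metis
      then have "phi (cS c') = phi (cS (oinv c))" using foeq_props by blast
      then have "c' = oinv c" using phi_cS assms(1-4) by simp
      then show ?thesis using assms(9) h by blast
    qed
  qed
  then have "RS (cS c) (hd ?L)" using assms(8) R by (simp add: RS_def)
  then show ?thesis using R by (simp add: successively_Cons)
qed

lemma block_pos:
  assumes "c \<in> oedges G" "\<not> isb c" "c' \<in> oedges G" "\<not> isb c'" "set r \<subseteq> oedges G"
    "\<forall>y\<in>set r. olab G y = b" "successively RG (c # r @ [c'])"
  shows "successively RS (cS c # betapos c r c' @ [cS c']) \<and> set (betapos c r c') \<subseteq> oedges S"
proof -
  note cp = cS_props[OF assms(1,2)]
  note cp' = cS_props[OF assms(3,4)]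
  have ch: "RG c (hd (r @ [c']))" "successively RG (r @ [c'])"
    using assms(7) by (auto simp: successively_Cons)
  have ic: "oinv c \<in> oedges G" "\<not> isb (oinv c)" using assms by auto
  have tl_term: "olab G (oinv c) \<in> A \<Longrightarrow>
     headS (oinv c) \<in> oedges S \<and> olab S (headS (oinv c)) = b \<and>
     oinit S (headS (oinv c)) = Inl (oterm G c) \<and> oterm S (headS (oinv c)) = oterm S (cS c)"
    using headS_props[OF ic] cS_props[OF assms(1,2)] by simp
  have ntl_term: "olab G (oinv c) \<notin> A \<Longrightarrow> oterm S (cS c) = Inl (oterm G c)"
    using cS_props[OF ic] cp by simp
  show ?thesis
  proof (cases "r = []")
    case r: True
    have v: "oterm G c = oinit G c'" "c' \<noteq> oinv c" using ch r by (auto simp: RG_def)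
    show ?thesis
    proof (cases "olab G (oinv c) \<in> A")
      case tl: False
      have fv: "fveq S (oterm S (cS c)) (Inl (oinit G (hd (r @ [c']))))"
        using ntl_term[OF tl] r v fveq_refl_G[OF assms(3)] by simp
      have "successively RS (cS c # map bS r @ Hh c' @ [cS c']) \<and> set (map bS r @ Hh c' @ [cS c']) \<subseteq> oedges S"
        using junction[OF assms(1-6) ch(2) fv] r v by simp
      moreover have "betapos c r c' = map bS r @ Hh c'" using r tl by (simp add: betapos_def Hh_def)
      ultimately show ?thesis by simp
    next
      case tl: True
      note t = tl_term[OF tl]
      show ?thesis
      proof (cases "olab G c' \<in> A")
        case hd: True
        note hp = headS_props[OF assms(3,4) hd]
        have bp: "betapos c r c' = []" using r tl hd by (simp add: betapos_def)
        have "fveq S (oterm S (headS (oinv c))) (oterm S (headS c'))"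
          using t hp v fveq_refl_G[OF assms(3)] by (intro bfold) auto
        then have fv: "fveq S (oterm S (cS c)) (oinit S (cS c'))" using t hp by simp
        have "\<not> foeq S (cS c') (oinv (cS c))"
        proof
          assume "foeq S (cS c') (oinv (cS c))"
          then have "phi (cS c') = phi (cS (oinv c))" using foeq_props cp by simp
          then show False using phi_cS assms(1-4) v by simp
        qed
        then show ?thesis using bp fv cp cp' by (simp add: RS_def)
      next
        case hd: False
        have bp: "betapos c r c' = [tailS c]" using r tl hd by (simp add: betapos_def)
        have ts: "tailS c \<in> oedges S" "olab S (tailS c) = linv b"
          "oinit S (tailS c) = oterm S (cS c)" "oterm S (tailS c) = Inl (oterm G c)"
          using t by (auto simp: tailS_def)
        have r1: "RS (cS c) (tailS c)"
        proof -
          have "\<not> foeq S (tailS c) (oinv (cS c))"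
            using foeq_lab[of "tailS c" "oinv (cS c)"] ts cp nb_neq[OF assms(2)] by auto
          moreover have "fveq S (oterm S (cS c)) (oinit S (tailS c))"
            using ts fveq_refl_o[OF ts(1)] by simp
          ultimately show ?thesis by (simp add: RS_def)
        qed
        have r2: "RS (tailS c) (cS c')"
        proof -
          have "\<not> foeq S (cS c') (oinv (tailS c))"
            using foeq_lab[of "cS c'" "oinv (tailS c)"] ts cp' nb_neq[OF assms(4)] by auto
          moreover have "fveq S (oterm S (tailS c)) (oinit S (cS c'))"
            using ts cp'(4)[OF hd] v fveq_refl_o[OF cp'(1)] by simp
          ultimately show ?thesis by (simp add: RS_def)
        qed
        show ?thesis using bp r1 r2 ts cp' by simp
      qed
    qed
  next
    case r: False
    then obtain y ys where yys: "r = y # ys" by (cases r) auto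
    have v: "oterm G c = oinit G y" using ch yys by (simp add: RG_def)
    show ?thesis
    proof (cases "olab G (oinv c) \<in> A")
      case tl: False
      have fv: "fveq S (oterm S (cS c)) (Inl (oinit G (hd (r @ [c']))))"
        using ntl_term[OF tl] yys v fveq_refl_G[of y] assms(5) by simp
      have "successively RS (cS c # map bS r @ Hh c' @ [cS c']) \<and> set (map bS r @ Hh c' @ [cS c']) \<subseteq> oedges S"
        using junction[OF assms(1-6) ch(2) fv] yys by simp
      moreover have "betapos c r c' = map bS r @ Hh c'" using r tl by (simp add: betapos_def)
      ultimately show ?thesis by simp
    next
      case tl: True
      note t = tl_term[OF tl]
      have yin: "y \<in> oedges G" "olab G y = b" "isb y" using assms(5,6) yys isb_lab by auto
      note bp = bS_props[OF yin(1,3)]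
      have ch2: "successively RG (ys @ [c'])" "RG y (hd (ys @ [c']))"
        using ch(2) yys by (auto simp: successively_Cons)
      have "fveq S (oterm S (headS (oinv c))) (oterm S (bS y))"
        using t bp yin(1,2) v fveq_refl_G[OF yin(1)] by (intro bfold) simp_all
      then have fv: "fveq S (oterm S (cS c)) (Inl (oinit G (hd (ys @ [c']))))"
        using t bp ch2(2) by (simp add: RG_def)
      have cond: "ys = [] \<and> olab G c' \<notin> A \<longrightarrow> c' \<noteq> oinv c" using tl by auto
      have "successively RS (cS c # map bS ys @ Hh c' @ [cS c']) \<and> set (map bS ys @ Hh c' @ [cS c']) \<subseteq> oedges S"
        using junction[OF assms(1-4) _ _ ch2(1) fv cond] assms(5,6) yys by simp
      moreover have "betapos c r c' = map bS ys @ Hh c'" using r tl yys by (simp add: betapos_def)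
      ultimately show ?thesis by simp
    qed
  qed
qed


lemma RG_adj_lab: assumes "x \<in> oedges G" "y \<in> oedges G" "isb x" "isb y" "RG x y"
  shows "olab G y = olab G x"
proof -
  have "fst (olab G y) = fst (olab G x)" using assms(3,4) by (simp add: isb_def fst_olab)
  then have "olab G y = olab G x \<or> olab G y = linv (olab G x)" by (rule same_fst_cases)
  moreover have "olab G y \<noteq> linv (olab G x)"
  proof
    assume "olab G y = linv (olab G x)"
    then have "y = oinv x" using tight_eq[of y "oinv x"] assms by (simp add: RG_def)
    then show False using assms(5) by (simp add: RG_def)
  qed
  ultimately show ?thesis by blast
qed

lemma run_labels: "set r \<subseteq> oedges G \<Longrightarrow> \<forall>y\<in>set r. isb y \<Longrightarrow> successively RG r \<Longrightarrow>
    \<forall>y\<in>set r. olab G y = olab G (hd r)"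
proof (induction r)
  case (Cons x r)
  show ?case
  proof (cases r)
    case Nil then show ?thesis by simp
  next
    case (Cons z zs)
    have "RG x z" "successively RG r" using Cons.prems \<open>r = z # zs\<close> by auto
    then have "olab G z = olab G x" using RG_adj_lab Cons.prems \<open>r = z # zs\<close> by auto
    then show ?thesis using Cons.IH Cons.prems \<open>r = z # zs\<close> \<open>successively RG r\<close> by auto
  qed
qed simp

lemma RS_rev: "RS x y \<Longrightarrow> RS (oinv y) (oinv x)"
  unfolding RS_def by (auto intro: fv_sym fo_sym)

lemma RG_rev: "RG x y \<Longrightarrow> RG (oinv y) (oinv x)"
  unfolding RG_def by auto

lemma succ_rev_map: assumes "successively R xs" "\<And>x y. R x y \<Longrightarrow> R (oinv y) (oinv x)"
  shows "successively R (rev (map oinv xs))"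
  unfolding successively_rev successively_map using assms(1)
  by (rule successively_mono) (use assms(2) in blast)

lemma block:
  assumes "c \<in> oedges G" "\<not> isb c" "c' \<in> oedges G" "\<not> isb c'" "set r \<subseteq> oedges G"
    "\<forall>y\<in>set r. isb y" "successively RG (c # r @ [c'])"
  shows "successively RS (cS c # beta c r c' @ [cS c']) \<and> set (beta c r c') \<subseteq> oedges S"
proof -
  have sr: "successively RG r" using assms(7)
    by (simp add: successively_Cons successively_append_iff)
  have rl: "\<forall>y\<in>set r. olab G y = olab G (hd r)" using run_labels[OF assms(5,6) sr] .
  show ?thesis
  proof (cases "r \<noteq> [] \<and> olab G (hd r) = linv b")
    case True
    let ?r2 = "rev (map oinv r)"
    have l2: "\<forall>y\<in>set ?r2. olab G y = b" using rl True by auto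
    have s2: "set ?r2 \<subseteq> oedges G" using assms(5) by auto
    have ch2: "successively RG (oinv c' # ?r2 @ [oinv c])"
      using succ_rev_map[OF assms(7) RG_rev] by simp
    have ic: "oinv c \<in> oedges G" "\<not> isb (oinv c)" "oinv c' \<in> oedges G" "\<not> isb (oinv c')"
      using assms by auto
    note B = block_pos[OF ic(3,4) ic(1,2) s2 l2 ch2]
    have "successively RS (rev (map oinv (cS (oinv c') # betapos (oinv c') ?r2 (oinv c) @ [cS (oinv c)])))"
      using succ_rev_map[OF conjunct1[OF B] RS_rev] .
    moreover have "rev (map oinv (cS (oinv c') # betapos (oinv c') ?r2 (oinv c) @ [cS (oinv c)]))
        = cS c # beta c r c' @ [cS c']"
      using True cS_props(3)[OF assms(1,2)] cS_props(3)[OF assms(3,4)] by (simp add: beta_def)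
    moreover have "set (beta c r c') \<subseteq> oedges S" using B True by (auto simp: beta_def)
    ultimately show ?thesis by simp
  next
    case False
    have "\<forall>y\<in>set r. olab G y = b"
    proof
      fix y assume y: "y \<in> set r"
      then have "r \<noteq> []" by auto
      have "fst (olab G (hd r)) = fst b" using assms(6) \<open>r \<noteq> []\<close> by (simp add: isb_def fst_olab)
      then have "olab G (hd r) = b" using same_fst_cases False \<open>r \<noteq> []\<close> by blast
      then show "olab G y = b" using rl y by simp
    qed
    moreover have "beta c r c' = betapos c r c'" using False unfolding beta_def by argo
    ultimately show ?thesis using block_pos[OF assms(1-5) _ assms(7)] by simp
  qed
qed


lemma RG_eq: "(\<lambda>x y. oterm G x = oinit G y \<and> y \<noteq> oinv x) = RG"
  by (simp add: RG_def fun_eq_iff)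

lemma core_mem:
  assumes loops: "\<forall>e\<in>edges G. \<exists>p d. immersed_loop G p \<and> (e, d) \<in> set p"
    and e: "e \<in> edges G" and nb: "fst (lab G e) \<noteq> fst b"
  shows "qedge S (e, k0 e) \<in> core_edges T"
proof -
  obtain p d where p: "immersed_loop G p" "(e, d) \<in> set p" using loops e by blast
  obtain q where q: "immersed_loop G q" "hd q = (e, d)" using immersed_rotate[OF p] by blast
  have qne: "q \<noteq> []" and qsub: "set q \<subseteq> oedges G" and qc: "cycP RG q"
    using q(1) unfolding immersed_loop_iff RG_eq by auto
  have ed: "(e, d) \<in> oedges G" "\<not> isb (e, d)" using e nb by (auto simp: oedges_def isb_def)
  define bl where "bl = blocks isb q"
  define m where "m = length bl"
  have blne: "bl \<noteq> []" "fst (hd bl) = (e, d)" using blocks_ne[OF qne, of isb] q(2) by (auto simp: bl_def)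
  then have m0: "m > 0" by (simp add: m_def)
  define segsG where "segsG = map (\<lambda>x. fst x # snd x) bl"
  have cq: "concat segsG = q"
    using blocks_concat[of isb q] by (simp add: segsG_def bl_def split_def)
  have sne: "\<forall>s\<in>set segsG. s \<noteq> []" by (auto simp: segsG_def)
  have sgne: "segsG \<noteq> []" using blne by (simp add: segsG_def)
  have cc: "(\<forall>s\<in>set segsG. successively RG s) \<and> cycP (\<lambda>s t. RG (last s) (hd t)) segsG"
    using cycP_concat[OF sgne sne, of RG] qc cq by simp
  have inq: "x \<in> set q" if "x \<in> set (fst (bl ! t) # snd (bl ! t))" "t < m" for x t
  proof -
    have "fst (bl ! t) # snd (bl ! t) \<in> set segsG" using that by (simp add: segsG_def m_def)
    then have "x \<in> set (concat segsG)" using that(1) by (auto simp del: set_simps)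
    then show ?thesis using cq by simp
  qed
  have cnb: "\<not> isb (fst (bl ! t))" if "t < m" for t
  proof -
    have "(fst (bl ! t), snd (bl ! t)) \<in> set bl" using that by (simp add: m_def)
    moreover have "\<not> isb (hd q)" using q(2) ed(2) by simp
    ultimately show ?thesis using blocks_head[of q isb] unfolding bl_def by blast
  qed
  have risb: "\<forall>y\<in>set (snd (bl ! t)). isb y" if "t < m" for t
  proof -
    have "(fst (bl ! t), snd (bl ! t)) \<in> set bl" using that by (simp add: m_def)
    then show ?thesis using blocks_run[of _ _ isb q] unfolding bl_def by blast
  qed
  have blk: "successively RG (fst (bl ! t) # snd (bl ! t) @ [fst (bl ! (Suc t mod m))])" if "t < m" for t
  proof -
    have "segsG ! t \<in> set segsG" using that by (simp add: m_def segsG_def)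
    then have a: "successively RG (fst (bl ! t) # snd (bl ! t))" using cc that by (simp add: segsG_def m_def)
    have "RG (last (segsG ! t)) (hd (segsG ! (Suc t mod length segsG)))"
      using cc that unfolding cycP_def by (simp add: segsG_def m_def)
    then have b: "RG (last (fst (bl ! t) # snd (bl ! t))) (fst (bl ! (Suc t mod m)))"
      using that m0 by (simp add: segsG_def m_def)
    show ?thesis using a b successively_append_iff[of RG "fst (bl ! t) # snd (bl ! t)" "[fst (bl ! (Suc t mod m))]"]
      by simp
  qed
  define segT where "segT t = cS (fst (bl ! t)) # beta (fst (bl ! t)) (snd (bl ! t)) (fst (bl ! (Suc t mod m)))" for t
  have BT: "successively RS (segT t @ [cS (fst (bl ! (Suc t mod m)))]) \<and>
            set (segT t) \<subseteq> oedges S" if "t < m" for t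
  proof -
    have t2: "Suc t mod m < m" using m0 by simp
    have "fst (bl ! t) \<in> oedges G" using inq[OF _ that, of "fst (bl ! t)"] qsub by auto
    moreover have "fst (bl ! (Suc t mod m)) \<in> oedges G"
      using inq[OF _ t2, of "fst (bl ! (Suc t mod m))"] qsub by auto
    moreover have "set (snd (bl ! t)) \<subseteq> oedges G" using inq[OF _ that] qsub by (meson list.set_intros(2) subsetD subsetI)
    ultimately have "successively RS (cS (fst (bl ! t)) # beta (fst (bl ! t)) (snd (bl ! t)) (fst (bl ! (Suc t mod m))) @ [cS (fst (bl ! (Suc t mod m)))]) \<and>
       set (beta (fst (bl ! t)) (snd (bl ! t)) (fst (bl ! (Suc t mod m)))) \<subseteq> oedges S"
      using block cnb[OF that] cnb[OF t2] risb[OF that] blk[OF that] by blast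
    moreover have "cS (fst (bl ! t)) \<in> oedges S"
      using cS_props(1) \<open>fst (bl ! t) \<in> oedges G\<close> cnb[OF that] by blast
    ultimately show ?thesis by (simp add: segT_def)
  qed
  define segs where "segs = map segT [0..<m]"
  define LS where "LS = concat segs"
  have segsne: "segs \<noteq> []" "\<forall>s\<in>set segs. s \<noteq> []" using m0 by (auto simp: segs_def segT_def)
  have c1: "\<forall>s\<in>set segs. successively RS s"
  proof
    fix s assume "s \<in> set segs"
    then obtain t where t: "t < m" "s = segT t" by (auto simp: segs_def)
    then show "successively RS s" using BT[OF t(1)] by (simp add: successively_append_iff)
  qed
  have c2: "cycP (\<lambda>s u. RS (last s) (hd u)) segs"
    unfolding cycP_def
  proof (intro allI impI)
    fix t assume t: "t < length segs"
    then have tm: "t < m" by (simp add: segs_def)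
    have "Suc t mod m < m" using m0 by simp
    then have "hd (segs ! (Suc t mod length segs)) = cS (fst (bl ! (Suc t mod m)))"
      by (simp add: segs_def segT_def)
    moreover have "RS (last (segs ! t)) (cS (fst (bl ! (Suc t mod m))))"
    proof -
      have ne: "segT t \<noteq> []" by (simp add: segT_def)
      have "RS (last (segT t)) (cS (fst (bl ! (Suc t mod m))))"
        using successively_append_iff[of RS "segT t" "[cS (fst (bl ! (Suc t mod m)))]"] BT[OF tm] ne
        by simp
      then show ?thesis using tm by (simp add: segs_def)
    qed
    ultimately show "RS (last (segs ! t)) (hd (segs ! (Suc t mod length segs)))" by simp
  qed
  have LSc: "cycP RS LS" unfolding LS_def using cycP_concat[OF segsne, of RS] c1 c2 by simp
  have LSsub: "set LS \<subseteq> oedges S" unfolding LS_def segs_def using BT by fastforce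
  have LSne: "LS \<noteq> []" unfolding LS_def using segsne by (cases segs) auto
  have imm: "immersed_loop T (map timg LS)"
    unfolding immersed_loop_iff
  proof (intro conjI)
    show "map timg LS \<noteq> []" using LSne by simp
    show "set (map timg LS) \<subseteq> oedges T" using LSsub timg_oedges by auto
    show "cycP (\<lambda>x y. oterm T x = oinit T y \<and> y \<noteq> oinv x) (map timg LS)"
      unfolding cycP_map
    proof (rule cycP_mono[OF LSc])
      fix x y assume xy: "x \<in> set LS" "y \<in> set LS" "RS x y"
      have xS: "x \<in> oedges S" "y \<in> oedges S" using xy LSsub by auto
      show "oterm T (timg x) = oinit T (timg y) \<and> timg y \<noteq> oinv (timg x)"
        using timg_consec[OF xS] timg_back[OF xS] xy(3) by (auto simp: RS_def)
    qed
  qed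
  have "cS (e, d) \<in> set LS"
  proof -
    have "bl ! 0 = hd bl" using blne by (simp add: hd_conv_nth)
    then have "cS (e, d) \<in> set (segT 0)" using blne by (simp add: segT_def)
    moreover have "segT 0 \<in> set segs" using m0 by (simp add: segs_def)
    ultimately show ?thesis by (auto simp: LS_def)
  qed
  then have "timg (cS (e, d)) \<in> set (map timg LS)" by simp
  moreover have "fst (timg (cS (e, d))) = qedge S (e, k0 e)" by (simp add: timg_def cS_def)
  ultimately have "\<exists>dd. (qedge S (e, k0 e), dd) \<in> set (map timg LS)"
    by (metis prod.collapse)
  moreover have "qedge S (e, k0 e) \<in> edges T"
  proof -
    have "cS (e, d) \<in> oedges S" using cS_props(1)[OF ed] .
    then have "(e, k0 e) \<in> edges S" by (simp add: cS_def oedges_def)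
    then show ?thesis by (simp add: tight_def)
  qed
  ultimately show ?thesis unfolding core_edges_def using imm by blast
qed


lemma cidx_k0: "fst (lab G e) \<noteq> fst b \<Longrightarrow> cidx b A (lab G e) = k0 e"
  by (simp add: cidx_eq k0_def)

lemma lab_T: assumes "s \<in> edges S" shows "fst (lab T (qedge S s)) = fst (lab S s)"
proof -
  have ps: "posor S s \<in> oedges S" using assms by (simp add: posor_def oedges_def)
  then have "posor S s \<in> qedge S s" by (simp add: qedge_def oclass_def fo_refl)
  then have "(SOME y. y \<in> qedge S s) \<in> qedge S s" by (rule someI)
  then have "foeq S (posor S s) (SOME y. y \<in> qedge S s)" by (simp add: qedge_def oclass_def)
  then have "olab S (SOME y. y \<in> qedge S s) = olab S (posor S s)" using foeq_lab by metis
  then show ?thesis by (simp add: tight_def fst_olab posor_def)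
qed

lemma comp_forward:
  assumes loops: "\<forall>e\<in>edges G. \<exists>p d. immersed_loop G p \<and> (e, d) \<in> set p"
    and e: "e \<in> edges G" and nb: "fst (lab G e) \<noteq> fst b"
  shows "qedge S (e, cidx b A (lab G e)) \<in> core_edges T \<and>
         fst (lab T (qedge S (e, cidx b A (lab G e)))) \<noteq> fst b"
proof -
  have ed: "(e, True) \<in> oedges G" "\<not> isb (e, True)" using e nb by (auto simp: oedges_def isb_def)
  have "(e, k0 e) \<in> edges S" using cS_props(1)[OF ed] by (simp add: cS_def oedges_def)
  moreover have "fst (lab S (e, k0 e)) = fst (lab G e)"
    using nb by (simp add: S_simps k0_def whw_kz)
  ultimately show ?thesis using core_mem[OF loops e nb] lab_T cidx_k0[OF nb] nb by simp
qed

lemma comp_inj: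
  assumes "e1 \<in> edges G" "fst (lab G e1) \<noteq> fst b" "e2 \<in> edges G" "fst (lab G e2) \<noteq> fst b"
    "qedge S (e1, cidx b A (lab G e1)) = qedge S (e2, cidx b A (lab G e2))"
  shows "e1 = e2"
proof -
  have q: "qedge S (e1, k0 e1) = qedge S (e2, k0 e2)" using assms cidx_k0 by simp
  have c1: "cS (e1, snd (lab S (e1, k0 e1))) = posor S (e1, k0 e1)" by (simp add: cS_def posor_def)
  have c2: "cS (e2, snd (lab S (e2, k0 e2))) = posor S (e2, k0 e2)" by (simp add: cS_def posor_def)
  have o1: "(e1, snd (lab S (e1, k0 e1))) \<in> oedges G" "\<not> isb (e1, snd (lab S (e1, k0 e1)))"
    using assms by (auto simp: oedges_def isb_def)
  have o2: "(e2, snd (lab S (e2, k0 e2))) \<in> oedges G" "\<not> isb (e2, snd (lab S (e2, k0 e2)))"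
    using assms by (auto simp: oedges_def isb_def)
  have "posor S (e2, k0 e2) \<in> oedges S" using cS_props(1)[OF o2] c2 by simp
  then have "posor S (e2, k0 e2) \<in> qedge S (e2, k0 e2)" by (simp add: qedge_def oclass_def fo_refl)
  then have "posor S (e2, k0 e2) \<in> qedge S (e1, k0 e1)" using q by simp
  then have "foeq S (posor S (e1, k0 e1)) (posor S (e2, k0 e2))" by (simp add: qedge_def oclass_def)
  then have "phi (posor S (e1, k0 e1)) = phi (posor S (e2, k0 e2))" using foeq_props by blast
  then show ?thesis using phi_cS[OF o1] phi_cS[OF o2] c1 c2 by simp
qed

lemma comp_surj:
  assumes "E \<in> core_edges T" "fst (lab T E) \<noteq> fst b"
  shows "\<exists>e. e \<in> edges G \<and> fst (lab G e) \<noteq> fst b \<and> E = qedge S (e, cidx b A (lab G e))"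
proof -
  have "E \<in> edges T" using assms(1) by (simp add: core_edges_def)
  then obtain s where s: "s \<in> edges S" "E = qedge S s" by (auto simp: tight_def)
  have "fst (lab S s) \<noteq> fst b" using assms(2) s lab_T by simp
  then have "fst (olab S (s, True)) \<noteq> fst b" by (simp add: olab_def)
  moreover have "(s, True) \<in> oedges S" using s by (simp add: oedges_def)
  ultimately obtain x where x: "x \<in> oedges G" "\<not> isb x" "(s, True) = cS x" using ctype by blast
  then have "s = (fst x, k0 (fst x))" by (simp add: cS_def)
  moreover have "fst x \<in> edges G" "fst (lab G (fst x)) \<noteq> fst b"
    using x by (auto simp: oedges_def isb_def)
  ultimately show ?thesis using s cidx_k0 by auto
qed

end


lemma unique_k: "fst x \<noteq> fst b \<Longrightarrow>
   \<exists>!k. k < length (whw b A x) \<and> fst (whw b A x ! k) = fst x"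
proof (rule ex1I[of _ "kz A x"])
  assume "fst x \<noteq> fst b"
  then show "kz A x < length (whw b A x) \<and> fst (whw b A x ! kz A x) = fst x"
    by (simp add: whw_len whw_kz)
next
  fix k assume "fst x \<noteq> fst b" "k < length (whw b A x) \<and> fst (whw b A x ! k) = fst x"
  then show "k = kz A x" using whw_fst_iff[of x b k A] by auto
qed

theorem lemma9p8:
  fixes Gs :: "('v, 'e, 'b::finite) lgraph list"
    and b :: "'b slabel" and A :: "'b slabel set"
  assumes "\<forall>G\<in>set Gs. wf_graph G \<and> finite_graph G \<and> connected_graph G \<and> tight_graph G \<and> is_core G"
    and "A \<subseteq> UNIV - {b, linv b}"
  shows "(\<forall>i e. (i, e) \<in> seq_edges Gs \<and> fst (lab (Gs ! i) e) \<noteq> fst b \<longrightarrow>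
            (\<exists>!k. k < length (whw b A (lab (Gs ! i) e)) \<and>
                  fst (whw b A (lab (Gs ! i) e) ! k) = fst (lab (Gs ! i) e)) \<and>
            eprime b A Gs (i, e) \<in> seq_edges (alpha_sharp b A Gs))
       \<and> bij_betw (eprime b A Gs)
           {(i, e). (i, e) \<in> seq_edges Gs \<and> fst (lab (Gs ! i) e) \<noteq> fst b}
           {(i, E). (i, E) \<in> seq_edges (alpha_sharp b A Gs) \<and>
                    fst (lab (alpha_sharp b A Gs ! i) E) \<noteq> fst b}"
proof -
  let ?S = "\<lambda>i. subdiv (whw b A) (Gs ! i)"
  have W: "whl b A (Gs ! i)" if "i < length Gs" for i
    unfolding whl_def using assms that nth_mem by blast
  have L: "\<forall>e\<in>edges (Gs ! i). \<exists>p d. immersed_loop (Gs ! i) p \<and> (e, d) \<in> set p"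
    if "i < length Gs" for i
  proof -
    have "is_core (Gs ! i)" using assms(1) that nth_mem by blast
    then have "edges (core (Gs ! i)) = edges (Gs ! i)" by (simp add: is_core_def)
    then have "core_edges (Gs ! i) = edges (Gs ! i)" by (simp add: core_def)
    then show ?thesis unfolding core_edges_def by blast
  qed
  have SE: "(i, E) \<in> seq_edges (alpha_sharp b A Gs) \<longleftrightarrow> i < length Gs \<and> E \<in> core_edges (tight (?S i))"
    for i E by (auto simp: seq_edges_def alpha_sharp_def core_def)
  have LB: "lab (alpha_sharp b A Gs ! i) E = lab (tight (?S i)) E" if "i < length Gs" for i E
    using that by (simp add: alpha_sharp_def core_def)
  have EP: "eprime b A Gs (i, e) = (i, qedge (?S i) (e, cidx b A (lab (Gs ! i) e)))" for i e
    by (simp add: eprime_def)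
  have fw: "eprime b A Gs (i, e) \<in> seq_edges (alpha_sharp b A Gs) \<and>
      fst (lab (alpha_sharp b A Gs ! i) (snd (eprime b A Gs (i, e)))) \<noteq> fst b"
    if "(i, e) \<in> seq_edges Gs" "fst (lab (Gs ! i) e) \<noteq> fst b" for i e
  proof -
    have i: "i < length Gs" "e \<in> edges (Gs ! i)" using that by (auto simp: seq_edges_def)
    show ?thesis using whl.comp_forward[OF W[OF i(1)] L[OF i(1)] i(2) that(2)] SE LB[OF i(1)] EP i(1)
      by simp
  qed
  show ?thesis
  proof (intro conjI allI impI)
    fix i e assume h: "(i, e) \<in> seq_edges Gs \<and> fst (lab (Gs ! i) e) \<noteq> fst b"
    show "\<exists>!k. k < length (whw b A (lab (Gs ! i) e)) \<and>
                  fst (whw b A (lab (Gs ! i) e) ! k) = fst (lab (Gs ! i) e)"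
      using unique_k h by blast
    show "eprime b A Gs (i, e) \<in> seq_edges (alpha_sharp b A Gs)" using fw h by blast
  next
    show "bij_betw (eprime b A Gs)
           {(i, e). (i, e) \<in> seq_edges Gs \<and> fst (lab (Gs ! i) e) \<noteq> fst b}
           {(i, E). (i, E) \<in> seq_edges (alpha_sharp b A Gs) \<and>
                    fst (lab (alpha_sharp b A Gs ! i) E) \<noteq> fst b}"
      unfolding bij_betw_def
    proof (intro conjI)
      show "inj_on (eprime b A Gs) {(i, e). (i, e) \<in> seq_edges Gs \<and> fst (lab (Gs ! i) e) \<noteq> fst b}"
      proof (rule inj_onI, clarify)
        fix i1 e1 i2 e2
        assume h1: "(i1, e1) \<in> seq_edges Gs" "fst (lab (Gs ! i1) e1) \<noteq> fst b"
          and h2: "(i2, e2) \<in> seq_edges Gs" "fst (lab (Gs ! i2) e2) \<noteq> fst b"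
          and eq: "eprime b A Gs (i1, e1) = eprime b A Gs (i2, e2)"
        have ii: "i1 = i2" using eq EP by simp
        have i: "i1 < length Gs" "e1 \<in> edges (Gs ! i1)" "e2 \<in> edges (Gs ! i1)"
          using h1 h2 ii by (auto simp: seq_edges_def)
        have "qedge (?S i1) (e1, cidx b A (lab (Gs ! i1) e1)) = qedge (?S i1) (e2, cidx b A (lab (Gs ! i1) e2))"
          using eq EP ii by simp
        then show "i1 = i2 \<and> e1 = e2"
          using whl.comp_inj[OF W[OF i(1)] i(2) h1(2) i(3)] h2(2) ii by simp
      qed
    next
      show "eprime b A Gs ` {(i, e). (i, e) \<in> seq_edges Gs \<and> fst (lab (Gs ! i) e) \<noteq> fst b} =
            {(i, E). (i, E) \<in> seq_edges (alpha_sharp b A Gs) \<and> fst (lab (alpha_sharp b A Gs ! i) E) \<noteq> fst b}"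
      proof (intro equalityI subsetI)
        fix z assume "z \<in> eprime b A Gs ` {(i, e). (i, e) \<in> seq_edges Gs \<and> fst (lab (Gs ! i) e) \<noteq> fst b}"
        then obtain i e where h: "(i, e) \<in> seq_edges Gs" "fst (lab (Gs ! i) e) \<noteq> fst b"
          "z = eprime b A Gs (i, e)" by auto
        have "fst z = i" using h(3) EP by simp
        then show "z \<in> {(i, E). (i, E) \<in> seq_edges (alpha_sharp b A Gs) \<and> fst (lab (alpha_sharp b A Gs ! i) E) \<noteq> fst b}"
          using fw[OF h(1,2)] h(3) by (cases z) auto
      next
        fix z assume "z \<in> {(i, E). (i, E) \<in> seq_edges (alpha_sharp b A Gs) \<and> fst (lab (alpha_sharp b A Gs ! i) E) \<noteq> fst b}"
        then obtain i E where z: "z = (i, E)" "(i, E) \<in> seq_edges (alpha_sharp b A Gs)"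
          "fst (lab (alpha_sharp b A Gs ! i) E) \<noteq> fst b" by auto
        have i: "i < length Gs" "E \<in> core_edges (tight (?S i))" using z SE by auto
        have "fst (lab (tight (?S i)) E) \<noteq> fst b" using z(3) LB[OF i(1)] by simp
        then obtain e where e: "e \<in> edges (Gs ! i)" "fst (lab (Gs ! i) e) \<noteq> fst b"
          "E = qedge (?S i) (e, cidx b A (lab (Gs ! i) e))"
          using whl.comp_surj[OF W[OF i(1)] i(2)] by blast
        have "(i, e) \<in> seq_edges Gs" using i e by (simp add: seq_edges_def)
        moreover have "z = eprime b A Gs (i, e)" using z e EP by simp
        ultimately show "z \<in> eprime b A Gs ` {(i, e). (i, e) \<in> seq_edges Gs \<and> fst (lab (Gs ! i) e) \<noteq> fst b}"
          using e by blast
      qed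
    qed
  qed
qed

end
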